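(* Let $a,b\ge1$, $P=[a]\times[b]$, $n=a+b$. For every $f\in(\mathbb R^+)^P$, if $Q(f)=(q_1,q_2,\dots,q_n)$ then $Q(\pi_{\mathcal B}f)=(q_2,q_3,\dots,q_n,q_1)$.
   Context: $[a]\times[b]=\{(i,j)\in\mathbb Z^2:1\le i\le a,\ 1\le j\le b\}$ with the product order. Let $\widehat P=P\cup\{\hat0,\hat1\}$ with $\hat0<x<\hat1$ for all $x\in P$; write $y\lessdot x$ for covering relations; $x^+=\{y\in\widehat P:y\gtrdot x\}$, $x^-=\{y\in\widehat P:y\lessdot x\}$. Each $f:P\to\mathbb R^+$ is extended by $\hat f(\hat0)=\hat f(\hat1)=1$. Parallel sum: $s_1\parallel\cdots\parallel s_m=(1/s_1+\cdots+1/s_m)^{-1}$. The birational toggle $\tau_x$ changes only the value at $x$: $(\tau_xf)(x)=\frac{1}{f(x)}\bigl(\sum_{y\in x^-}\hat f(y)\bigr)\bigl(\|_{y\in x^+}\hat f(y)\bigr)$. The $k$-th file ($1\le k\le n-1$) is $\{(i,j)\in P:j-i+a=k\}$; $\tau^*_k$ is the composition of the toggles over file $k$; birational promotion is $\pi_{\mathcal B}=\tau^*_{n-1}\circ\cdots\circ\tau^*_1$. For $f\in(\mathbb R^+)^P$ let $p_k=\prod_{x\in\text{file }k}f(x)$ for $1\le k\le n-1$, $p_0=p_n=1$, $q_k=p_k/p_{k-1}$ for $1\le k\le n$; $Q(f)=(q_1,\dots,q_n)$. *)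

theory Defs
  imports Complex_Main
begin

definition grid :: "nat \<Rightarrow> nat \<Rightarrow> (nat \<times> nat) set" where
  "grid a b = {(i, j). 1 \<le> i \<and> i \<le> a \<and> 1 \<le> j \<and> j \<le> b}"

definition pleq :: "nat \<times> nat \<Rightarrow> nat \<times> nat \<Rightarrow> bool" where
  "pleq x y \<longleftrightarrow> fst x \<le> fst y \<and> snd x \<le> snd y"

datatype 'a hat = Bot | Top | El 'a

definition hatP :: "(nat \<times> nat) set \<Rightarrow> (nat \<times> nat) hat set" where
  "hatP P = {Bot, Top} \<union> El ` P"

fun hle :: "(nat \<times> nat) hat \<Rightarrow> (nat \<times> nat) hat \<Rightarrow> bool" where
  "hle Bot _ = True"
| "hle _ Top = True"
| "hle (El x) (El y) = pleq x y"
| "hle _ _ = False"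

definition hless :: "(nat \<times> nat) hat \<Rightarrow> (nat \<times> nat) hat \<Rightarrow> bool" where
  "hless x y \<longleftrightarrow> hle x y \<and> x \<noteq> y"

definition covers :: "(nat \<times> nat) set \<Rightarrow> (nat \<times> nat) hat \<Rightarrow> (nat \<times> nat) hat \<Rightarrow> bool" where
  "covers P y x \<longleftrightarrow> y \<in> hatP P \<and> x \<in> hatP P \<and> hless y x \<and>
     \<not> (\<exists>z \<in> hatP P. hless y z \<and> hless z x)"

definition up_covers :: "(nat \<times> nat) set \<Rightarrow> (nat \<times> nat) hat \<Rightarrow> (nat \<times> nat) hat set" where
  "up_covers P x = {y. covers P x y}"

definition down_covers :: "(nat \<times> nat) set \<Rightarrow> (nat \<times> nat) hat \<Rightarrow> (nat \<times> nat) hat set" where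
  "down_covers P x = {y. covers P y x}"

fun hatf :: "(nat \<times> nat \<Rightarrow> real) \<Rightarrow> (nat \<times> nat) hat \<Rightarrow> real" where
  "hatf f Bot = 1"
| "hatf f Top = 1"
| "hatf f (El x) = f x"

definition par_sum :: "('b \<Rightarrow> real) \<Rightarrow> 'b set \<Rightarrow> real" where
  "par_sum g S = 1 / (\<Sum>y\<in>S. 1 / g y)"

definition btoggle :: "(nat \<times> nat) set \<Rightarrow> nat \<times> nat \<Rightarrow> (nat \<times> nat \<Rightarrow> real) \<Rightarrow> (nat \<times> nat \<Rightarrow> real)" where
  "btoggle P x f = f(x := (1 / f x) * (\<Sum>y\<in>down_covers P (El x). hatf f y)
                                  * par_sum (hatf f) (up_covers P (El x)))"

definition gfile :: "nat \<Rightarrow> nat \<Rightarrow> nat \<Rightarrow> (nat \<times> nat) set" where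
  "gfile a b k = {(i, j) \<in> grid a b. int j - int i + int a = int k}"

(* \<tau>*_k: composition of the toggles over file k (they commute; we toggle in increasing row index i; the element
   of file k in row i is (i, k + i - a)) *)
definition toggle_file :: "nat \<Rightarrow> nat \<Rightarrow> nat \<Rightarrow> (nat \<times> nat \<Rightarrow> real) \<Rightarrow> (nat \<times> nat \<Rightarrow> real)" where
  "toggle_file a b k f = fold (\<lambda>i. btoggle (grid a b) (i, nat (int k + int i - int a)))
     (filter (\<lambda>i. (i, nat (int k + int i - int a)) \<in> gfile a b k) [1..<a + 1]) f"

definition bpro :: "nat \<Rightarrow> nat \<Rightarrow> (nat \<times> nat \<Rightarrow> real) \<Rightarrow> (nat \<times> nat \<Rightarrow> real)" where
  "bpro a b f = fold (toggle_file a b) [1..<a + b] f"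

definition pfile :: "nat \<Rightarrow> nat \<Rightarrow> (nat \<times> nat \<Rightarrow> real) \<Rightarrow> nat \<Rightarrow> real" where
  "pfile a b f k = (if k = 0 \<or> k = a + b then 1 else \<Prod>x\<in>gfile a b k. f x)"

definition qfile :: "nat \<Rightarrow> nat \<Rightarrow> (nat \<times> nat \<Rightarrow> real) \<Rightarrow> nat \<Rightarrow> real" where
  "qfile a b f k = pfile a b f k / pfile a b f (k - 1)"

definition Qvec :: "nat \<Rightarrow> nat \<Rightarrow> (nat \<times> nat \<Rightarrow> real) \<Rightarrow> real list" where
  "Qvec a b f = map (qfile a b f) [1..<a + b + 1]"

end

theory Submission
  imports Defs
begin

lemma hless_simps[simp]:
  "hless Bot (El x) = True" "hless Bot Top = True" "hless w Bot = False" "hless Top w = False"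
  "hless (El x) Top = True" "hless (El x) (El y) = (pleq x y \<and> x \<noteq> y)"
  by (cases w; simp add: hless_def)+

lemma hatP_simps[simp]: "Bot \<in> hatP P" "Top \<in> hatP P" "El x \<in> hatP P \<longleftrightarrow> x \<in> P"
  by (auto simp: hatP_def)

lemma bex_hatP: "(\<exists>z\<in>hatP P. Q z) \<longleftrightarrow> Q Bot \<or> Q Top \<or> (\<exists>x\<in>P. Q (El x))"
  by (auto simp: hatP_def)

lemma between_nat:
  assumes "(p,q) \<in> grid a b" "(i,j) \<in> grid a b" "p \<le> i" "q \<le> j" "(p,q) \<noteq> (i,j)"
    "\<not>(p+1=i \<and> q=j)" "\<not>(p=i \<and> q+1=j)"
  shows "\<exists>z\<in>grid a b. pleq (p,q) z \<and> z \<noteq> (p,q) \<and> pleq z (i,j) \<and> z \<noteq> (i,j)"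
proof (cases "p < i")
  case True
  show ?thesis
  proof (cases "q < j")
    case True
    then show ?thesis using \<open>p<i\<close> assms by (intro bexI[of _ "(i,q)"]) (auto simp: pleq_def grid_def)
  next
    case False
    then show ?thesis using \<open>p<i\<close> assms by (intro bexI[of _ "(p+1,q)"]) (auto simp: pleq_def grid_def)
  qed
next
  case False
  then show ?thesis using assms by (intro bexI[of _ "(p,q+1)"]) (auto simp: pleq_def grid_def)
qed

lemma down_char:
  assumes "(i,j) \<in> grid a b"
  shows "down_covers (grid a b) (El (i,j)) =
    (if 2 \<le> i then {El (i-1,j)} else {}) \<union> (if 2 \<le> j then {El (i,j-1)} else {})
    \<union> (if i = 1 \<and> j = 1 then {Bot} else {})"
proof (rule set_eqI)
  fix y show "y \<in> down_covers (grid a b) (El (i,j)) \<longleftrightarrow> y \<in> (if 2 \<le> i then {El (i-1,j)} else {}) \<union> (if 2 \<le> j then {El (i,j-1)} else {})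
    \<union> (if i = 1 \<and> j = 1 then {Bot} else {})"
  proof (cases y)
    case Bot
    have "(\<exists>z\<in>grid a b. pleq z (i,j) \<and> z \<noteq> (i,j)) \<longleftrightarrow> \<not>(i = 1 \<and> j = 1)"
    proof
      assume "\<exists>z\<in>grid a b. pleq z (i,j) \<and> z \<noteq> (i,j)"
      then show "\<not>(i = 1 \<and> j = 1)" by (auto simp: grid_def pleq_def)
    next
      assume "\<not>(i = 1 \<and> j = 1)"
      then show "\<exists>z\<in>grid a b. pleq z (i,j) \<and> z \<noteq> (i,j)" using assms
        by (intro bexI[of _ "(1,1)"]) (auto simp: grid_def pleq_def)
    qed
    then show ?thesis using Bot assms by (auto simp: down_covers_def covers_def bex_hatP)
  next
    case Top
    then show ?thesis by (auto simp: down_covers_def covers_def)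
  next
    case (El z)
    obtain p q where z: "z = (p,q)" by (cases z)
    show ?thesis
    proof
      assume "y \<in> down_covers (grid a b) (El (i,j))"
      then have c: "(p,q) \<in> grid a b" "pleq (p,q) (i,j)" "(p,q) \<noteq> (i,j)"
        "\<not>(\<exists>w\<in>grid a b. pleq (p,q) w \<and> w \<noteq> (p,q) \<and> pleq w (i,j) \<and> w \<noteq> (i,j))"
        using El z by (auto simp: down_covers_def covers_def bex_hatP)
      have "(p+1=i \<and> q=j) \<or> (p=i \<and> q+1=j)"
        using between_nat[of p q a b i j] c assms by (auto simp: pleq_def)
      then show "y \<in> (if 2 \<le> i then {El (i-1,j)} else {}) \<union> (if 2 \<le> j then {El (i,j-1)} else {})
        \<union> (if i = 1 \<and> j = 1 then {Bot} else {})" using El z c by (auto simp: grid_def)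
    next
      assume "y \<in> (if 2 \<le> i then {El (i-1,j)} else {}) \<union> (if 2 \<le> j then {El (i,j-1)} else {})
        \<union> (if i = 1 \<and> j = 1 then {Bot} else {})"
      then show "y \<in> down_covers (grid a b) (El (i,j))" using El z assms
        by (auto simp: down_covers_def covers_def bex_hatP grid_def pleq_def split: if_splits)
    qed
  qed
qed

lemma up_char:
  assumes "(i,j) \<in> grid a b"
  shows "up_covers (grid a b) (El (i,j)) =
    (if i < a then {El (i+1,j)} else {}) \<union> (if j < b then {El (i,j+1)} else {})
    \<union> (if i = a \<and> j = b then {Top} else {})"
proof (rule set_eqI)
  fix y show "y \<in> up_covers (grid a b) (El (i,j)) \<longleftrightarrow> y \<in> (if i < a then {El (i+1,j)} else {}) \<union> (if j < b then {El (i,j+1)} else {})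
    \<union> (if i = a \<and> j = b then {Top} else {})"
  proof (cases y)
    case Top
    have "(\<exists>z\<in>grid a b. pleq (i,j) z \<and> (i,j) \<noteq> z) \<longleftrightarrow> \<not>(i = a \<and> j = b)"
    proof
      assume "\<exists>z\<in>grid a b. pleq (i,j) z \<and> (i,j) \<noteq> z"
      then show "\<not>(i = a \<and> j = b)" by (auto simp: grid_def pleq_def)
    next
      assume "\<not>(i = a \<and> j = b)"
      then show "\<exists>z\<in>grid a b. pleq (i,j) z \<and> (i,j) \<noteq> z" using assms
        by (intro bexI[of _ "(a,b)"]) (auto simp: grid_def pleq_def)
    qed
    then show ?thesis using Top assms by (auto simp: up_covers_def covers_def bex_hatP)
  next
    case Bot
    then show ?thesis by (auto simp: up_covers_def covers_def)
  next
    case (El z)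
    obtain p q where z: "z = (p,q)" by (cases z)
    show ?thesis
    proof
      assume "y \<in> up_covers (grid a b) (El (i,j))"
      then have c: "(p,q) \<in> grid a b" "pleq (i,j) (p,q)" "(i,j) \<noteq> (p,q)"
        "\<not>(\<exists>w\<in>grid a b. pleq (i,j) w \<and> w \<noteq> (i,j) \<and> pleq w (p,q) \<and> w \<noteq> (p,q))"
        using El z by (auto simp: up_covers_def covers_def bex_hatP)
      have "(i+1=p \<and> j=q) \<or> (i=p \<and> j+1=q)"
        using between_nat[of i j a b p q] c assms by (auto simp: pleq_def)
      then show "y \<in> (if i < a then {El (i+1,j)} else {}) \<union> (if j < b then {El (i,j+1)} else {})
        \<union> (if i = a \<and> j = b then {Top} else {})" using El z c by (auto simp: grid_def)
    next
      assume "y \<in> (if i < a then {El (i+1,j)} else {}) \<union> (if j < b then {El (i,j+1)} else {})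
        \<union> (if i = a \<and> j = b then {Top} else {})"
      then show "y \<in> up_covers (grid a b) (El (i,j))" using El z assms
        by (auto simp: up_covers_def covers_def bex_hatP grid_def pleq_def split: if_splits)
    qed
  qed
qed


definition Dv :: "nat \<Rightarrow> nat \<Rightarrow> (nat \<times> nat \<Rightarrow> real) \<Rightarrow> nat \<times> nat \<Rightarrow> real" where
  "Dv a b g x = (\<Sum>y\<in>down_covers (grid a b) (El x). hatf g y)"
definition Uv :: "nat \<Rightarrow> nat \<Rightarrow> (nat \<times> nat \<Rightarrow> real) \<Rightarrow> nat \<times> nat \<Rightarrow> real" where
  "Uv a b g x = par_sum (hatf g) (up_covers (grid a b) (El x))"
definition newv :: "nat \<Rightarrow> nat \<Rightarrow> (nat \<times> nat \<Rightarrow> real) \<Rightarrow> nat \<times> nat \<Rightarrow> real" where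
  "newv a b g x = 1 / g x * Dv a b g x * Uv a b g x"

lemma Dv_val:
  assumes "(i,j) \<in> grid a b"
  shows "Dv a b g (i,j) = (if 2 \<le> i then g (i-1,j) else 0) + (if 2 \<le> j then g (i,j-1) else 0)
     + (if i = 1 \<and> j = 1 then 1 else 0)"
proof -
  have i1: "1 \<le> i" and j1: "1 \<le> j" using assms by (auto simp: grid_def)
  show ?thesis
    unfolding Dv_def down_char[OF assms]
    using i1 j1 by (cases "2 \<le> i"; cases "2 \<le> j") auto
qed

lemma Uv_val:
  assumes "(i,j) \<in> grid a b"
  shows "Uv a b g (i,j) = 1 / ((if i < a then 1 / g (i+1,j) else 0) + (if j < b then 1 / g (i,j+1) else 0)
     + (if i = a \<and> j = b then 1 else 0))"
proof -
  have i1: "i \<le> a" and j1: "j \<le> b" using assms by (auto simp: grid_def)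
  show ?thesis
    unfolding Uv_def par_sum_def up_char[OF assms]
    using i1 j1 by (cases "i < a"; cases "j < b") auto
qed

lemma gfile_grid: "x \<in> gfile a b k \<Longrightarrow> x \<in> grid a b"
  by (auto simp: gfile_def)

lemma locality:
  assumes x: "x \<in> gfile a b k" and hg: "\<forall>y\<in>grid a b. y \<notin> gfile a b k \<longrightarrow> h y = g y"
  shows "Dv a b h x = Dv a b g x \<and> Uv a b h x = Uv a b g x"
proof -
  obtain i j where ij: "x = (i,j)" by (cases x)
  have g: "(i,j) \<in> grid a b" and f: "int j - int i + int a = int k" using x ij by (auto simp: gfile_def)
  have hh: "\<And>p q. (p,q) \<in> grid a b \<Longrightarrow> int q - int p + int a \<noteq> int k \<Longrightarrow> h (p,q) = g (p,q)"
    using hg by (auto simp: gfile_def)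
  have e1: "2 \<le> i \<Longrightarrow> h (i-1,j) = g (i-1,j)" using g f by (intro hh) (auto simp: grid_def)
  have e2: "2 \<le> j \<Longrightarrow> h (i,j-1) = g (i,j-1)" using g f by (intro hh) (auto simp: grid_def)
  have e3: "i < a \<Longrightarrow> h (i+1,j) = g (i+1,j)" using g f by (intro hh) (auto simp: grid_def)
  have e4: "j < b \<Longrightarrow> h (i,j+1) = g (i,j+1)" using g f by (intro hh) (auto simp: grid_def)
  show ?thesis unfolding ij Dv_val[OF g] Uv_val[OF g] using e1 e2 e3 e4 by auto
qed

lemma btoggle_eq: "btoggle (grid a b) x g = g(x := newv a b g x)"
  by (simp add: btoggle_def newv_def Dv_def Uv_def)

lemma fold_toggle:
  assumes "distinct rs" "\<forall>i\<in>set rs. (i, c i) \<in> gfile a b k"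
  shows "fold (\<lambda>i. btoggle (grid a b) (i, c i)) rs g
     = (\<lambda>x. if x \<in> (\<lambda>i. (i, c i)) ` set rs then newv a b g x else g x)"
  using assms
proof (induction rs arbitrary: g)
  case Nil
  then show ?case by simp
next
  case (Cons r rs)
  define g1 where "g1 = g((r, c r) := newv a b g (r, c r))"
  have rin: "(r, c r) \<in> gfile a b k" using Cons.prems by simp
  have IH: "fold (\<lambda>i. btoggle (grid a b) (i, c i)) rs g1
     = (\<lambda>x. if x \<in> (\<lambda>i. (i, c i)) ` set rs then newv a b g1 x else g1 x)"
    using Cons by auto
  have agree: "\<forall>y\<in>grid a b. y \<notin> gfile a b k \<longrightarrow> g1 y = g y" using rin g1_def by auto
  have nv: "x \<in> (\<lambda>i. (i, c i)) ` set rs \<Longrightarrow> newv a b g1 x = newv a b g x" for x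
  proof -
    assume xin: "x \<in> (\<lambda>i. (i, c i)) ` set rs"
    then have xk: "x \<in> gfile a b k" using Cons.prems by auto
    have "x \<noteq> (r, c r)" using xin Cons.prems by auto
    then have "g1 x = g x" by (simp add: g1_def)
    then show ?thesis using locality[OF xk agree] by (simp add: newv_def)
  qed
  have "fold (\<lambda>i. btoggle (grid a b) (i, c i)) (r # rs) g = fold (\<lambda>i. btoggle (grid a b) (i, c i)) rs g1"
    by (simp add: btoggle_eq g1_def)
  also have "\<dots> = (\<lambda>x. if x \<in> (\<lambda>i. (i, c i)) ` set rs then newv a b g1 x else g1 x)" by (rule IH)
  also have "\<dots> = (\<lambda>x. if x \<in> (\<lambda>i. (i, c i)) ` set (r # rs) then newv a b g x else g x)"
  proof (rule ext)
    fix x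
    show "(if x \<in> (\<lambda>i. (i, c i)) ` set rs then newv a b g1 x else g1 x)
        = (if x \<in> (\<lambda>i. (i, c i)) ` set (r # rs) then newv a b g x else g x)"
    proof (cases "x \<in> (\<lambda>i. (i, c i)) ` set rs")
      case True
      then show ?thesis using nv by auto
    next
      case False
      then show ?thesis by (auto simp: g1_def)
    qed
  qed
  finally show ?case .
qed

lemma toggle_file_eq:
  "toggle_file a b k g = (\<lambda>x. if x \<in> gfile a b k then newv a b g x else g x)"
proof -
  let ?c = "\<lambda>i. nat (int k + int i - int a)"
  let ?rs = "filter (\<lambda>i. (i, ?c i) \<in> gfile a b k) [1..<a + 1]"
  have "(\<lambda>i. (i, ?c i)) ` set ?rs = gfile a b k"
  proof
    show "(\<lambda>i. (i, ?c i)) ` set ?rs \<subseteq> gfile a b k" by auto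
    show "gfile a b k \<subseteq> (\<lambda>i. (i, ?c i)) ` set ?rs"
    proof
      fix x assume x: "x \<in> gfile a b k"
      obtain i j where ij: "x = (i,j)" by (cases x)
      have "j = ?c i" "1 \<le> i" "i \<le> a" using x ij by (auto simp: gfile_def grid_def)
      then have "i \<in> {1..<a+1}" by auto
      then have "i \<in> set [1..<a+1]" by (simp only: set_upt)
      moreover have "(i, ?c i) \<in> gfile a b k" using x ij \<open>j = ?c i\<close> by simp
      ultimately have "i \<in> set ?rs" by (simp only: set_filter) blast
      then show "x \<in> (\<lambda>i. (i, ?c i)) ` set ?rs" using ij \<open>j = ?c i\<close> by blast
    qed
  qed
  moreover have "fold (\<lambda>i. btoggle (grid a b) (i, ?c i)) ?rs g
     = (\<lambda>x. if x \<in> (\<lambda>i. (i, ?c i)) ` set ?rs then newv a b g x else g x)"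
    by (rule fold_toggle) auto
  ultimately show ?thesis by (simp add: toggle_file_def)
qed


definition E :: "nat \<Rightarrow> nat \<Rightarrow> (nat \<times> nat \<Rightarrow> real) \<Rightarrow> nat \<times> nat \<Rightarrow> real" where
  "E a b g y = (if y \<in> grid a b then g y else 1)"

lemma prodE:
  assumes "finite S" "\<forall>i\<in>S. a \<le> m + i" "\<forall>x\<in>gfile a b m. fst x \<in> S"
  shows "(\<Prod>x\<in>gfile a b m. g x) = (\<Prod>i\<in>S. E a b g (i, m + i - a))"
proof -
  let ?T = "{i \<in> S. (i, m + i - a) \<in> grid a b}"
  have "(\<Prod>i\<in>S. E a b g (i, m + i - a)) = (\<Prod>i\<in>?T. g (i, m + i - a))"
    unfolding E_def using assms(1) by (simp add: prod.If_cases Int_def)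
  also have "\<dots> = (\<Prod>x\<in>(\<lambda>i. (i, m + i - a)) ` ?T. g x)"
    by (rule prod.reindex_cong[symmetric, where l = "\<lambda>i. (i, m + i - a)"]) (auto simp: inj_on_def)
  also have "(\<lambda>i. (i, m + i - a)) ` ?T = gfile a b m"
  proof
    show "(\<lambda>i. (i, m + i - a)) ` ?T \<subseteq> gfile a b m"
      using assms(2) by (auto simp: gfile_def)
    show "gfile a b m \<subseteq> (\<lambda>i. (i, m + i - a)) ` ?T"
    proof
      fix x assume x: "x \<in> gfile a b m"
      obtain i j where ij: "x = (i,j)" by (cases x)
      have "j = m + i - a" using x ij by (auto simp: gfile_def)
      moreover have "i \<in> S" using x ij assms(3) by auto
      ultimately show "x \<in> (\<lambda>i. (i, m + i - a)) ` ?T" using x ij gfile_grid by blast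
    qed
  qed
  finally show ?thesis by simp
qed

lemma telescope:
  fixes D U L R :: "nat \<Rightarrow> real"
  assumes "D (Suc l) = L (Suc l) * R l"
    "\<forall>i. Suc l \<le> i \<longrightarrow> i < Suc l + d \<longrightarrow> D (Suc i) * U i = L (Suc i) * R i"
  shows "(\<Prod>i\<in>{Suc l..Suc l + d}. D i * U i)
       = (\<Prod>i\<in>{Suc l..Suc l + d}. L i) * (\<Prod>i\<in>{l..l + d}. R i) * U (Suc l + d)"
  using assms(2)
proof (induction d)
  case 0
  then show ?case using assms(1) by simp
next
  case (Suc d)
  have h: "D (Suc (Suc l + d)) * U (Suc l + d) = L (Suc (Suc l + d)) * R (Suc l + d)"
    using Suc.prems by simp
  have "(\<Prod>i\<in>{Suc l..Suc l + Suc d}. D i * U i) = (\<Prod>i\<in>{Suc l..Suc l + d}. D i * U i) * (D (Suc (Suc l + d)) * U (Suc (Suc l + d)))"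
    by simp
  also have "\<dots> = ((\<Prod>i\<in>{Suc l..Suc l + d}. L i) * (\<Prod>i\<in>{l..l + d}. R i) * U (Suc l + d)) * (D (Suc (Suc l + d)) * U (Suc (Suc l + d)))"
    using Suc.IH Suc.prems by simp
  also have "\<dots> = (\<Prod>i\<in>{Suc l..Suc l + d}. L i) * (\<Prod>i\<in>{l..l + d}. R i) * (D (Suc (Suc l + d)) * U (Suc l + d)) * U (Suc (Suc l + d))"
    by (simp add: algebra_simps)
  also have "\<dots> = (\<Prod>i\<in>{Suc l..Suc l + Suc d}. L i) * (\<Prod>i\<in>{l..l + Suc d}. R i) * U (Suc l + Suc d)"
    unfolding h by simp
  finally show ?case .
qed

lemma gfile0: "gfile a b 0 = {}" by (auto simp: gfile_def grid_def)
lemma gfilen: "gfile a b (a + b) = {}" by (auto simp: gfile_def grid_def)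

lemma pfile_eq: "pfile a b g m = (\<Prod>x\<in>gfile a b m. g x)"
  by (auto simp: pfile_def gfile0 gfilen)


lemma prod_file:
  assumes ab: "1 \<le> a" "1 \<le> b" and k: "1 \<le> k" "k < a + b" and pos: "\<forall>x\<in>grid a b. g x > 0"
  shows "(\<Prod>x\<in>gfile a b k. Dv a b g x * Uv a b g x) = pfile a b g (k-1) * pfile a b g (k+1)"
proof -
  define l where "l = (if a \<le> k then 0 else a - k)"
  define hi where "hi = (if k \<le> b then a else a + b - k)"
  define d where "d = hi - Suc l"
  have lohi: "Suc l \<le> hi" using ab k by (auto simp: l_def hi_def)
  have hid: "hi = Suc l + d" using lohi d_def by simp
  have ingrid: "\<And>i. Suc l \<le> i \<Longrightarrow> i \<le> hi \<Longrightarrow> (i, k+i-a) \<in> grid a b"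
    using ab k by (auto simp: l_def hi_def grid_def split: if_splits)
  define D where "D i = Dv a b g (i, k+i-a)" for i
  define U where "U i = Uv a b g (i, k+i-a)" for i
  define L where "L i = E a b g (i, (k-1)+i-a)" for i
  define R where "R i = E a b g (i, (k+1)+i-a)" for i
  have s1: "(\<Prod>x\<in>gfile a b k. Dv a b g x * Uv a b g x)
      = (\<Prod>i\<in>{Suc l..hi}. E a b (\<lambda>x. Dv a b g x * Uv a b g x) (i, k+i-a))"
    by (rule prodE) (auto simp: l_def hi_def gfile_def grid_def)
  have s2: "\<dots> = (\<Prod>i\<in>{Suc l..hi}. D i * U i)"
    by (rule prod.cong) (auto simp: E_def D_def U_def ingrid)
  have c1: "D (Suc l) = L (Suc l) * R l"
  proof (cases "a \<le> k")
    case True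
    then have l0: "l = 0" by (simp add: l_def)
    have g1: "(1, k+1-a) \<in> grid a b" using True k ab by (auto simp: grid_def)
    have e1: "k - 1 + 1 - a = k - a" using True k by simp
    have "D 1 = Dv a b g (1, k+1-a)" by (simp add: D_def)
    also have "\<dots> = (if 2 \<le> k+1-a then g (1, k+1-a-1) else 0) + (if k+1-a = 1 then 1 else 0)"
      by (subst Dv_val[OF g1]) simp
    finally have dd: "D 1 = (if 2 \<le> k+1-a then g (1, k+1-a-1) else 0) + (if k+1-a = 1 then 1 else 0)" .
    show ?thesis using True k ab unfolding l0 One_nat_def[symmetric] dd L_def R_def
      by (cases "k = a") (auto simp: E_def grid_def e1)
  next
    case False
    then have l0: "Suc l = a + 1 - k" "l = a - k" "2 \<le> Suc l" using k by (auto simp: l_def)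
    have g1: "(Suc l, 1) \<in> grid a b" using False k ab l0 by (auto simp: grid_def)
    have e1: "k + Suc l - a = 1" "k - 1 + Suc l - a = 0" "k + 1 + l - a = 1" using l0 False k by auto
    have dv: "Dv a b g (Suc l, 1) = g (l, 1)" using l0 by (subst Dv_val[OF g1]) auto
    show ?thesis unfolding D_def L_def R_def e1 dv
      using l0 g1 by (auto simp: E_def grid_def)
  qed
  have c2: "\<forall>i. Suc l \<le> i \<longrightarrow> i < Suc l + d \<longrightarrow> D (Suc i) * U i = L (Suc i) * R i"
  proof (intro allI impI)
    fix i assume i: "Suc l \<le> i" "i < Suc l + d"
    define j where "j = k + i - a"
    have gi: "(i, j) \<in> grid a b" using ingrid[of i] i hid j_def by simp
    have ka: "a < k + i" using i k l_def by (auto split: if_splits)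
    have ej: "k + Suc i - a = Suc j" using ka j_def by simp
    have gi1: "(Suc i, Suc j) \<in> grid a b" using ingrid[of "Suc i"] i hid unfolding ej by simp
    have j1: "k + Suc i - a = Suc j" "k - 1 + Suc i - a = j" "k + 1 + i - a = Suc j"
      using i k j_def l_def by (auto split: if_splits)
    have ga: "(Suc i, j) \<in> grid a b" "(i, Suc j) \<in> grid a b" using gi gi1 by (auto simp: grid_def)
    have p1: "g (Suc i, j) > 0" "g (i, Suc j) > 0" using pos ga by auto
    have ij: "2 \<le> Suc i" "2 \<le> Suc j" "i < a" "j < b" using gi gi1 by (auto simp: grid_def)
    show "D (Suc i) * U i = L (Suc i) * R i"
      unfolding D_def U_def L_def R_def j1 j_def[symmetric]
      using ij ga p1 by (simp add: Dv_val[OF gi1] Uv_val[OF gi] E_def field_simps)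
  qed
  have c3: "U hi = L (Suc hi) * R hi"
  proof (cases "k \<le> b")
    case True
    then have h0: "hi = a" by (simp add: hi_def)
    have ga: "(a, k) \<in> grid a b" using True k ab by (auto simp: grid_def)
    have e1: "k + a - a = k" "k + 1 + a - a = k + 1" by auto
    have uv: "Uv a b g (a,k) = (if k < b then g (a,k+1) else 1)"
      using True by (subst Uv_val[OF ga]) auto
    show ?thesis unfolding h0 U_def L_def R_def e1 uv
      using True ab by (auto simp: E_def grid_def)
  next
    case False
    then have h0: "hi = a + b - k" "hi < a" using k by (auto simp: hi_def)
    have ga: "(hi, b) \<in> grid a b" using False k ab h0 by (auto simp: grid_def)
    have e1: "k + hi - a = b" "k - 1 + Suc hi - a = b" "k + 1 + hi - a = Suc b" using h0 False k by auto
    have ga2: "(Suc hi, b) \<in> grid a b" using ga h0 by (auto simp: grid_def)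
    have uv: "Uv a b g (hi,b) = g (Suc hi, b)"
      using h0 by (subst Uv_val[OF ga]) auto
    show ?thesis unfolding U_def L_def R_def e1 uv
      using h0 ga2 by (auto simp: E_def grid_def)
  qed
  have s3: "(\<Prod>i\<in>{Suc l..hi}. D i * U i) = (\<Prod>i\<in>{Suc l..Suc hi}. L i) * (\<Prod>i\<in>{l..hi}. R i)"
  proof -
    have "(\<Prod>i\<in>{Suc l..hi}. D i * U i) = (\<Prod>i\<in>{Suc l..hi}. L i) * (\<Prod>i\<in>{l..l+d}. R i) * U hi"
      using telescope[of D l L R d U, OF c1 c2] hid by simp
    also have "\<dots> = (\<Prod>i\<in>{Suc l..hi}. L i) * L (Suc hi) * ((\<Prod>i\<in>{l..l+d}. R i) * R hi)"
      unfolding c3 by (simp add: algebra_simps)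
    also have "\<dots> = (\<Prod>i\<in>{Suc l..Suc hi}. L i) * (\<Prod>i\<in>{l..hi}. R i)"
      using hid lohi by simp
    finally show ?thesis .
  qed
  have s4: "pfile a b g (k-1) = (\<Prod>i\<in>{Suc l..Suc hi}. L i)"
    unfolding pfile_eq L_def using k
    by (intro prodE) (auto simp: l_def hi_def gfile_def grid_def)
  have s5: "pfile a b g (k+1) = (\<Prod>i\<in>{l..hi}. R i)"
    unfolding pfile_eq R_def using k
    by (intro prodE) (auto simp: l_def hi_def gfile_def grid_def)
  show ?thesis using s1 s2 s3 s4 s5 by simp
qed


lemma newv_pos:
  assumes x: "x \<in> grid a b" and pos: "\<forall>y\<in>grid a b. g y > 0"
  shows "newv a b g x > 0"
proof -
  obtain i j where ij: "x = (i,j)" by (cases x)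
  have g: "(i,j) \<in> grid a b" using x ij by simp
  have ij1: "1 \<le> i" "i \<le> a" "1 \<le> j" "j \<le> b" using g by (auto simp: grid_def)
  have p1: "2 \<le> i \<Longrightarrow> g (i-1,j) > 0" using ij1 by (intro pos[rule_format]) (auto simp: grid_def)
  have p2: "2 \<le> j \<Longrightarrow> g (i,j-1) > 0" using ij1 by (intro pos[rule_format]) (auto simp: grid_def)
  have p3: "i < a \<Longrightarrow> g (i+1,j) > 0" using ij1 by (intro pos[rule_format]) (auto simp: grid_def)
  have p4: "j < b \<Longrightarrow> g (i,j+1) > 0" using ij1 by (intro pos[rule_format]) (auto simp: grid_def)
  have D: "Dv a b g (i,j) > 0" unfolding Dv_val[OF g]
    using p1 p2 ij1 by (cases "2 \<le> i"; cases "2 \<le> j") (auto intro: add_pos_nonneg add_nonneg_pos)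
  have "(if i < a then 1 / g (i+1,j) else 0) + (if j < b then 1 / g (i,j+1) else 0)
     + (if i = a \<and> j = b then 1 else 0) > (0::real)"
    using p3 p4 ij1 by (cases "i < a"; cases "j < b") (auto intro: add_pos_nonneg add_nonneg_pos)
  then have U: "Uv a b g (i,j) > 0" unfolding Uv_val[OF g] by simp
  show ?thesis using D U pos g ij by (simp add: newv_def)
qed

lemma pfile_pos:
  assumes "\<forall>y\<in>grid a b. g y > 0" shows "pfile a b g m > 0"
  unfolding pfile_eq using assms gfile_grid by (intro prod_pos) auto

lemma gfile_unique: "x \<in> gfile a b m \<Longrightarrow> x \<in> gfile a b m' \<Longrightarrow> m = m'"
  by (auto simp: gfile_def)

lemma main_part:
  fixes a b :: nat and f :: "nat \<times> nat \<Rightarrow> real"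
  assumes ab: "a \<ge> 1" "b \<ge> 1"
    and pos: "\<forall>x \<in> grid a b. f x > 0"
  shows "Qvec a b (bpro a b f) = tl (Qvec a b f) @ [hd (Qvec a b f)]"
proof -
  define N where "N = a + b"
  define gs where "gs k = fold (toggle_file a b) [1..<k+1] f" for k
  have gs0: "gs 0 = f" by (simp add: gs_def)
  have gsS: "gs (Suc k) = toggle_file a b (Suc k) (gs k)" for k
    by (simp add: gs_def)
  have gpos: "\<forall>x\<in>grid a b. gs k x > 0" for k
  proof (induction k)
    case 0 then show ?case using pos gs0 by simp
  next
    case (Suc k) then show ?case using newv_pos by (auto simp: gsS toggle_file_eq)
  qed
  have late: "x \<in> gfile a b m \<Longrightarrow> k < m \<Longrightarrow> gs k x = f x" for x m k
  proof (induction k)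
    case 0 then show ?case by (simp add: gs0)
  next
    case (Suc k)
    then have "x \<notin> gfile a b (Suc k)" using gfile_unique[of x a b m "Suc k"] by auto
    then have "gs (Suc k) x = gs k x" by (simp add: gsS toggle_file_eq)
    then show ?case using Suc by simp
  qed
  have early: "m \<le> k \<Longrightarrow> x \<in> gfile a b m \<Longrightarrow> gs k x = gs m x" for x m k
  proof (induction k rule: dec_induct)
    case base then show ?case by simp
  next
    case (step k)
    then have "x \<notin> gfile a b (Suc k)" using gfile_unique[of x a b m "Suc k"] by auto
    then have "gs (Suc k) x = gs k x" by (simp add: gsS toggle_file_eq)
    then show ?case using step by simp
  qed
  have pf_late: "k < m \<Longrightarrow> pfile a b (gs k) m = pfile a b f m" for k m
    unfolding pfile_eq by (rule prod.cong[OF refl], erule late, assumption)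
  have pf_early: "m \<le> k \<Longrightarrow> pfile a b (gs k) m = pfile a b (gs m) m" for k m
    unfolding pfile_eq by (rule prod.cong[OF refl], rule early, assumption+)
  define p where "p m = pfile a b f m" for m
  have ppos: "p m > 0" for m unfolding p_def using pfile_pos pos by blast
  have step: "Suc k < N \<Longrightarrow> pfile a b (gs (Suc k)) (Suc k)
     = pfile a b (gs k) k * pfile a b (gs k) (k+2) / pfile a b (gs k) (Suc k)" for k
  proof -
    assume kN: "Suc k < N"
    have "pfile a b (gs (Suc k)) (Suc k) = (\<Prod>x\<in>gfile a b (Suc k). newv a b (gs k) x)"
      unfolding pfile_eq gsS toggle_file_eq by simp
    also have "\<dots> = (\<Prod>x\<in>gfile a b (Suc k). Dv a b (gs k) x * Uv a b (gs k) x / gs k x)"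
      by (simp add: newv_def)
    also have "\<dots> = (\<Prod>x\<in>gfile a b (Suc k). Dv a b (gs k) x * Uv a b (gs k) x) / pfile a b (gs k) (Suc k)"
      by (simp add: prod_dividef pfile_eq)
    also have "\<dots> = pfile a b (gs k) k * pfile a b (gs k) (k+2) / pfile a b (gs k) (Suc k)"
      using prod_file[of a b "Suc k" "gs k"] ab kN gpos N_def by simp
    finally show ?thesis .
  qed
  have mainind: "k < N \<Longrightarrow> pfile a b (gs k) k = p (k+1) / p 1" for k
  proof (induction k)
    case 0
    then show ?case using ppos[of 1] by (simp add: pfile_def)
  next
    case (Suc k)
    then have "pfile a b (gs (Suc k)) (Suc k) = (p (k+1) / p 1) * p (k+2) / p (Suc k)"
      using step[of k] pf_late[of k "k+2"] pf_late[of k "Suc k"] by (simp add: p_def)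
    also have "\<dots> = p (Suc k + 1) / p 1" using ppos[of "Suc k"] by (simp add: field_simps)
    finally show ?case .
  qed
  define F where "F = bpro a b f"
  have FN: "F = gs (N - 1)" using ab by (simp add: F_def bpro_def gs_def N_def)
  have pF: "m \<le> N - 1 \<Longrightarrow> pfile a b F m = p (m+1) / p 1" for m
    using FN pf_early[of m "N-1"] mainind[of m] ab N_def by simp
  have qF: "1 \<le> m \<Longrightarrow> m \<le> N - 1 \<Longrightarrow> qfile a b F m = qfile a b f (Suc m)" for m
  proof -
    assume m: "1 \<le> m" "m \<le> N - 1"
    have "qfile a b F m = (p (m+1) / p 1) / (p m / p 1)"
      using pF[of m] pF[of "m-1"] m by (simp add: qfile_def)
    also have "\<dots> = p (m+1) / p m" using ppos[of 1] ppos[of m] by (simp add: field_simps)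
    finally show ?thesis by (simp add: qfile_def p_def)
  qed
  have qFN: "qfile a b F N = qfile a b f 1"
  proof -
    have "qfile a b F N = 1 / (p N / p 1)"
      using pF[of "N-1"] ab N_def by (simp add: qfile_def pfile_def)
    also have "\<dots> = p 1" using ab N_def by (simp add: p_def pfile_def)
    finally show ?thesis by (simp add: qfile_def p_def pfile_def)
  qed
  have N1: "1 \<le> N" using ab N_def by simp
  have l1: "Qvec a b F = map (qfile a b F) [1..<N] @ [qfile a b F N]"
    unfolding Qvec_def N_def[symmetric] using N1 by simp
  have l2: "map (qfile a b F) [1..<N] = map (qfile a b f) [2..<N+1]"
  proof -
    have "map (qfile a b F) [1..<N] = map (qfile a b f \<circ> Suc) [1..<N]"
      using qF by (intro map_cong) auto
    also have "\<dots> = map (qfile a b f) (map Suc [1..<N])" by simp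
    also have "map Suc [1..<N] = [2..<N+1]" by (simp only: map_Suc_upt Suc_1 Suc_eq_plus1 one_add_one)
    finally show ?thesis .
  qed
  have l3: "Qvec a b f = qfile a b f 1 # map (qfile a b f) [2..<N+1]"
  proof -
    have u0: "1 < N+1" using N1 by simp
    have u: "[1..<N+1] = 1 # [2..<N+1]" using upt_conv_Cons[OF u0] unfolding Suc_1 .
    show ?thesis unfolding Qvec_def N_def[symmetric] u by simp
  qed
  show ?thesis unfolding F_def[symmetric] l1 l2 l3 qFN by simp
qed


theorem corollary7:
  fixes a b :: nat and f :: "nat \<times> nat \<Rightarrow> real"
  assumes "a \<ge> 1" and "b \<ge> 1"
    and "\<forall>x \<in> grid a b. f x > 0"
  shows "Qvec a b (bpro a b f) = tl (Qvec a b f) @ [hd (Qvec a b f)]"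
  using main_part[OF assms] .

end
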